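(* Let $E=\mathbb{Q}(i,\sqrt5)$, let $\tau=(1+\sqrt5)/2$, and let $\sigma$ be the automorphism of $E$ with $\sigma(i)=i$ and $\sigma(\sqrt5)=-\sqrt5$. For a real number $N\ge 1$ let $\mathbf{L}(N)$ be the set of numbers $x=(a+bi)+(c+di)\tau\in E$ with $a,b,c,d\in\mathbb{Z}$ and $|a|,|b|,|c|,|d|\le N$. For $x_1,x_2\in E$ put $$X(x_1,x_2)=\begin{pmatrix} x_1 & \sigma(x_1)\\ i\,x_2 & \sigma(x_2)\end{pmatrix},\qquad D(N,N)=\min_{x_1,x_2\in\mathbf{L}(N)\setminus\{0\}}\left|\det X(x_1,x_2)\right|.$$ Then $$\limsup_{N\to\infty}\left(-\frac{\log D(N,N)}{\log N}\right)=2.$$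
   Context: This is the two-user single-antenna Badr–Belfiore multiuser MIMO code; $\det X(x_1,x_2)\neq0$ whenever $x_1,x_2\neq0$, so $D(N,N)>0$. *)

theory Defs
  imports "HOL-Analysis.Analysis"
begin

definition Qi :: "complex set" where
  "Qi = {of_real (of_rat r) + of_real (of_rat s) * \<i> | r s. True}"

definition E :: "complex set" where
  "E = {p + q * of_real (sqrt 5) | p q. p \<in> Qi \<and> q \<in> Qi}"

definition sigmaE :: "complex \<Rightarrow> complex" where
  "sigmaE x = (THE y. \<exists>p q. p \<in> Qi \<and> q \<in> Qi \<and> x = p + q * of_real (sqrt 5)
                              \<and> y = p - q * of_real (sqrt 5))"

definition tau :: complex where
  "tau = of_real ((1 + sqrt 5) / 2)"

definition Lset :: "real \<Rightarrow> complex set" where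
  "Lset N = {(of_int a + of_int b * \<i>) + (of_int c + of_int d * \<i>) * tau | a b c d :: int.
               \<bar>real_of_int a\<bar> \<le> N \<and> \<bar>real_of_int b\<bar> \<le> N \<and>
               \<bar>real_of_int c\<bar> \<le> N \<and> \<bar>real_of_int d\<bar> \<le> N}"

definition detX :: "complex \<Rightarrow> complex \<Rightarrow> complex" where
  "detX x1 x2 = x1 * sigmaE x2 - sigmaE x1 * (\<i> * x2)"

definition Dmin :: "real \<Rightarrow> real" where
  "Dmin N = Min {cmod (detX x1 x2) | x1 x2. x1 \<in> Lset N - {0} \<and> x2 \<in> Lset N - {0}}"

end

theory Submission
  imports Defs
begin


definition t :: real where "t = (1 + sqrt 5) / 2"
definition tb :: real where "tb = (1 - sqrt 5) / 2"
definition taub :: complex where "taub = of_real tb"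

lemma s5: "sqrt 5 * sqrt 5 = (5::real)" by simp
lemma s5_bounds: "2 < sqrt (5::real)" "sqrt (5::real) < 3"
  by (simp_all add: real_less_rsqrt real_less_lsqrt)

lemma t_tb: "t * tb = -1" unfolding t_def tb_def by (simp add: algebra_simps s5) 
lemma t_plus_tb: "t + tb = 1" unfolding t_def tb_def by (simp add: field_simps)
lemma t_minus_tb: "t - tb = sqrt 5" unfolding t_def tb_def by (simp add: field_simps)
lemma t_sq: "t^2 = t + 1" unfolding t_def power2_eq_square by (simp add: algebra_simps s5)
lemma tb_sq: "tb^2 = tb + 1" 
proof -
  have "tb^2 = (1 - 2 * sqrt 5 + sqrt 5 * sqrt 5)/4" unfolding tb_def power2_eq_square by (simp add: algebra_simps)
  also have "... = tb + 1" unfolding s5 tb_def by (simp add: field_simps)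
  finally show ?thesis .
qed
lemma t_gt: "t > 1" "t < 2" using s5_bounds unfolding t_def by auto
lemma tb_bds: "tb < 0" "tb > -1" using s5_bounds unfolding tb_def by auto
lemma abs_tb: "\<bar>tb\<bar> = 1 / t" using t_tb t_gt tb_bds by (auto simp: field_simps abs_if)
lemma tau_t: "tau = of_real t" unfolding tau_def t_def ..

lemma sqrt5_irrat: "sqrt 5 \<notin> \<rat>"
proof
  assume "sqrt 5 \<in> \<rat>"
  then obtain r where r: "sqrt 5 = of_rat r" by (auto elim: Rats_cases)
  obtain a b where ab: "quotient_of r = (a, b)" by (cases "quotient_of r")
  have b0: "b > 0" and cop: "coprime a b" and rab: "r = of_int a / of_int b"
    using quotient_of_denom_pos[OF ab] quotient_of_coprime[OF ab] quotient_of_div[OF ab] by auto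
  have "sqrt 5 = real_of_int a / real_of_int b" using r rab by (simp add: of_rat_divide)
  then have "sqrt 5 * real_of_int b = real_of_int a" using b0 by (simp add: field_simps)
  then have "(sqrt 5 * real_of_int b)^2 = (real_of_int a)^2" by simp
  then have "5 * real_of_int (b^2) = real_of_int (a^2)" by (simp add: power_mult_distrib)
  then have e: "5 * b^2 = a^2" by (metis of_int_eq_iff of_int_mult of_int_numeral)
  have p5: "prime (5::int)" by simp
  have "5 dvd a^2" using e by (metis dvd_triv_left)
  then have "5 dvd a" using p5 prime_dvd_power by blast
  then obtain k where k: "a = 5 * k" by blast
  then have "b^2 = 5 * k^2" using e by (simp add: power_mult_distrib)
  then have "5 dvd b^2" by simp
  then have "5 dvd b" using p5 prime_dvd_power by blast
  then have "is_unit (5::int)" using coprime_common_divisor[OF cop \<open>5 dvd a\<close>] by blast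
  then show False by simp
qed


lemma Qi_iff: "z \<in> Qi \<longleftrightarrow> Re z \<in> \<rat> \<and> Im z \<in> \<rat>"
proof
  assume "z \<in> Qi"
  then obtain r s where "z = of_real (of_rat r) + of_real (of_rat s) * \<i>" unfolding Qi_def by auto
  then show "Re z \<in> \<rat> \<and> Im z \<in> \<rat>" by simp
next
  assume "Re z \<in> \<rat> \<and> Im z \<in> \<rat>"
  then obtain r s where r: "Re z = of_rat r" and s: "Im z = of_rat s" by (metis Rats_cases)
  have "z = of_real (of_rat r) + of_real (of_rat s) * \<i>" using r s by (simp add: complex_eq_iff)
  then show "z \<in> Qi" unfolding Qi_def by blast
qed

lemma real_rep_unique:
  assumes "a \<in> \<rat>" "b \<in> \<rat>" "c \<in> \<rat>" "d \<in> \<rat>" "a + b * sqrt 5 = c + d * sqrt 5"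
  shows "b = d"
proof (rule ccontr)
  assume "b \<noteq> d"
  then have nz: "d - b \<noteq> 0" by simp
  have h: "(d - b) * sqrt 5 = a - c" using assms(5) unfolding left_diff_distrib by linarith
  have "sqrt 5 = ((d - b) * sqrt 5) / (d - b)" using nz by simp
  then have "sqrt 5 = (a - c) / (d - b)" unfolding h .
  moreover have "(a - c) / (d - b) \<in> \<rat>" using assms by (intro Rats_divide Rats_diff)
  ultimately show False using sqrt5_irrat by simp
qed

lemma rep_unique:
  assumes "p \<in> Qi" "q \<in> Qi" "p' \<in> Qi" "q' \<in> Qi"
    and e: "p + q * of_real (sqrt 5) = p' + q' * of_real (sqrt 5)"
  shows "q = q'" "p = p'"
proof -
  have hRe: "Re p + Re q * sqrt 5 = Re p' + Re q' * sqrt 5" using arg_cong[OF e, of Re] by simp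
  have 1: "Re q = Re q'" using real_rep_unique[OF _ _ _ _ hRe] assms(1-4) by (auto simp: Qi_iff)
  have hIm: "Im p + Im q * sqrt 5 = Im p' + Im q' * sqrt 5" using arg_cong[OF e, of Im] by simp
  have 2: "Im q = Im q'" using real_rep_unique[OF _ _ _ _ hIm] assms(1-4) by (auto simp: Qi_iff)
  show "q = q'" using 1 2 by (simp add: complex_eq_iff)
  then show "p = p'" using e by simp
qed

lemma sigma_rep:
  assumes "p \<in> Qi" "q \<in> Qi"
  shows "sigmaE (p + q * of_real (sqrt 5)) = p - q * of_real (sqrt 5)"
  unfolding sigmaE_def
proof (rule the_equality)
  show "\<exists>p' q'. p' \<in> Qi \<and> q' \<in> Qi \<and> p + q * of_real (sqrt 5) = p' + q' * of_real (sqrt 5)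
          \<and> p - q * of_real (sqrt 5) = p' - q' * of_real (sqrt 5)" using assms by blast
next
  fix y assume "\<exists>p' q'. p' \<in> Qi \<and> q' \<in> Qi \<and> p + q * of_real (sqrt 5) = p' + q' * of_real (sqrt 5)
          \<and> y = p' - q' * of_real (sqrt 5)"
  then obtain p' q' where h: "p' \<in> Qi" "q' \<in> Qi" "p + q * of_real (sqrt 5) = p' + q' * of_real (sqrt 5)"
      "y = p' - q' * of_real (sqrt 5)" by blast
  show "y = p - q * of_real (sqrt 5)" using rep_unique[OF assms h(1,2,3)] h(4) by simp
qed

lemma sigma_L:
  "sigmaE (of_int a + of_int b * \<i> + (of_int c + of_int d * \<i>) * tau)
     = of_int a + of_int b * \<i> + (of_int c + of_int d * \<i>) * taub"
proof -
  define p where "p = of_int a + of_int b * \<i> + (of_int c + of_int d * \<i>) / 2"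
  define q where "q = (of_int c + of_int d * \<i>) / (2::complex)"
  have pQ: "p \<in> Qi" unfolding Qi_iff p_def by simp
  have qQ: "q \<in> Qi" unfolding Qi_iff q_def by simp
  have tau_e: "tau = 1/2 + of_real (sqrt 5) / 2" unfolding tau_def by (simp add: add_divide_distrib)
  have taub_e: "taub = 1/2 - of_real (sqrt 5) / 2" unfolding taub_def tb_def by (simp add: diff_divide_distrib)
  have 1: "of_int a + of_int b * \<i> + (of_int c + of_int d * \<i>) * tau = p + q * of_real (sqrt 5)"
    unfolding p_def q_def tau_e by (simp add: algebra_simps)
  have 2: "of_int a + of_int b * \<i> + (of_int c + of_int d * \<i>) * taub = p - q * of_real (sqrt 5)"
    unfolding p_def q_def taub_e by (simp add: algebra_simps)
  show ?thesis unfolding 1 2 using sigma_rep[OF pQ qQ] .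
qed


definition GI :: "complex set" where "GI = {z. Re z \<in> \<int> \<and> Im z \<in> \<int>}"

lemma GI_add: "z \<in> GI \<Longrightarrow> w \<in> GI \<Longrightarrow> z + w \<in> GI" unfolding GI_def by auto
lemma GI_diff: "z \<in> GI \<Longrightarrow> w \<in> GI \<Longrightarrow> z - w \<in> GI" unfolding GI_def by auto
lemma GI_mult: "z \<in> GI \<Longrightarrow> w \<in> GI \<Longrightarrow> z * w \<in> GI" unfolding GI_def by auto
lemma GI_i: "z \<in> GI \<Longrightarrow> \<i> * z \<in> GI" unfolding GI_def by auto
lemma GI_int: "of_int a + of_int b * \<i> \<in> GI" unfolding GI_def by auto

lemma GI_norm_ge:
  assumes "z \<in> GI" "z \<noteq> 0" shows "cmod z \<ge> 1"
proof -
  obtain a b where a: "Re z = of_int a" and b: "Im z = of_int b" using assms(1) unfolding GI_def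
    by (auto elim!: Ints_cases)
  have "a \<noteq> 0 \<or> b \<noteq> 0" using assms(2) a b by (auto simp: complex_eq_iff)
  then have "a^2 + b^2 \<ge> 1" by (auto simp: power2_eq_square)
       (smt (verit) mult_le_0_iff zero_le_square)+
  then have "(real_of_int a)^2 + (real_of_int b)^2 \<ge> 1"
    by (metis of_int_add of_int_le_iff of_int_1 of_int_power)
  then show ?thesis unfolding cmod_def a b by simp
qed

lemma tau_sq: "tau * tau = tau + 1"
  using t_sq unfolding tau_t power2_eq_square by (metis of_real_1 of_real_add of_real_mult)
lemma taub_sq: "taub * taub = taub + 1"
  using tb_sq unfolding taub_def power2_eq_square by (metis of_real_1 of_real_add of_real_mult)
lemma tau_taub: "tau * taub = -1"
  using t_tb unfolding tau_t taub_def by (metis of_real_1 of_real_minus of_real_mult)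
lemma tau_plus_taub: "tau + taub = 1"
  using t_plus_tb unfolding tau_t taub_def by (metis of_real_1 of_real_add)

definition GP :: "complex \<Rightarrow> complex \<Rightarrow> bool" where
  "GP x x' \<longleftrightarrow> (\<exists>\<alpha> \<beta>. \<alpha> \<in> GI \<and> \<beta> \<in> GI \<and> x = \<alpha> + \<beta> * tau \<and> x' = \<alpha> + \<beta> * taub)"

lemma GP_mult:
  assumes "GP x x'" "GP y y'" shows "GP (x * y) (x' * y')"
proof -
  obtain a b c d where h: "a \<in> GI" "b \<in> GI" "c \<in> GI" "d \<in> GI"
    "x = a + b * tau" "x' = a + b * taub" "y = c + d * tau" "y' = c + d * taub"
    using assms unfolding GP_def by blast
  have "x * y = a*c + (a*d + b*c)*tau + b*d*(tau*tau)"
    unfolding h(5,7) by (simp add: algebra_simps)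
  then have 1: "x * y = (a*c + b*d) + (a*d + b*c + b*d) * tau"
    unfolding tau_sq by (simp add: algebra_simps)
  have "x' * y' = a*c + (a*d + b*c)*taub + b*d*(taub*taub)"
    unfolding h(6,8) by (simp add: algebra_simps)
  then have 2: "x' * y' = (a*c + b*d) + (a*d + b*c + b*d) * taub"
    unfolding taub_sq by (simp add: algebra_simps)
  show ?thesis unfolding GP_def
    by (intro exI[of _ "a*c + b*d"] exI[of _ "a*d + b*c + b*d"]) (simp add: 1 2 GI_add GI_mult h(1-4))
qed

lemma GP_diff:
  assumes "GP x x'" "GP y y'" shows "GP (x - y) (x' - y')"
proof -
  obtain a b c d where h: "a \<in> GI" "b \<in> GI" "c \<in> GI" "d \<in> GI"
    "x = a + b * tau" "x' = a + b * taub" "y = c + d * tau" "y' = c + d * taub"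
    using assms unfolding GP_def by blast
  have 1: "x - y = (a - c) + (b - d) * tau" unfolding h(5,7) by (simp add: algebra_simps)
  have 2: "x' - y' = (a - c) + (b - d) * taub" unfolding h(6,8) by (simp add: algebra_simps)
  show ?thesis unfolding GP_def
    by (intro exI[of _ "a - c"] exI[of _ "b - d"]) (simp add: 1 2 GI_diff h(1-4))
qed

lemma GP_i:
  assumes "GP x x'" shows "GP (\<i> * x) (\<i> * x')"
proof -
  obtain a b where h: "a \<in> GI" "b \<in> GI" "x = a + b * tau" "x' = a + b * taub"
    using assms unfolding GP_def by blast
  have 1: "\<i> * x = \<i> * a + (\<i> * b) * tau" unfolding h(3) by (simp add: algebra_simps)
  have 2: "\<i> * x' = \<i> * a + (\<i> * b) * taub" unfolding h(4) by (simp add: algebra_simps)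
  show ?thesis unfolding GP_def
    by (intro exI[of _ "\<i> * a"] exI[of _ "\<i> * b"]) (simp add: 1 2 GI_i h(1-2))
qed

lemma GP_swap:
  assumes "GP x x'" shows "GP x' x"
proof -
  obtain a b where h: "a \<in> GI" "b \<in> GI" "x = a + b * tau" "x' = a + b * taub"
    using assms unfolding GP_def by blast
  have tb: "taub = 1 - tau" using tau_plus_taub by (simp add: algebra_simps)
  have 1: "x' = (a + b) + (- b) * tau" unfolding h(4) tb by (simp add: algebra_simps)
  have 2: "x = (a + b) + (- b) * taub" unfolding h(3) tb by (simp add: algebra_simps)
  have "- b \<in> GI" using h(2) unfolding GI_def by auto
  then show ?thesis unfolding GP_def
    by (intro exI[of _ "a + b"] exI[of _ "- b"]) (simp add: 1 2 GI_add h(1-2))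
qed

lemma GP_norm:
  assumes "GP x x'" shows "x * x' \<in> GI"
proof -
  obtain a b where h: "a \<in> GI" "b \<in> GI" "x = a + b * tau" "x' = a + b * taub"
    using assms unfolding GP_def by blast
  have "x * x' = a*a + a*b*(tau + taub) + b*b*(tau*taub)" unfolding h(3,4) by (simp add: algebra_simps)
  also have "... = a*a + a*b - b*b" unfolding tau_taub tau_plus_taub by simp
  finally show ?thesis using h(1,2) by (simp add: GI_add GI_diff GI_mult)
qed

lemma GI_lin_zero:
  assumes "a \<in> GI" "b \<in> GI" "a + b * of_real ((1 + e * sqrt 5)/2) = 0" "e = 1 \<or> e = -1"
  shows "a = 0 \<and> b = 0"
proof -
  have ra: "Re a \<in> \<rat>" "Im a \<in> \<rat>" "Re b \<in> \<rat>" "Im b \<in> \<rat>"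
    using assms(1,2) unfolding GI_def by (auto intro: Ints_subset_Rats[THEN subsetD])
  have eR: "e \<in> \<rat>" using assms(4) by auto
  have r: "(Re a + Re b / 2) + (e * Re b / 2) * sqrt 5 = 0 + 0 * sqrt 5"
    using arg_cong[OF assms(3), of Re] by (simp add: field_simps)
  have "e * Re b / 2 = 0"
    by (rule real_rep_unique[OF _ _ _ _ r]) (use ra eR in auto)
  then have 1: "Re b = 0" "Re a = 0" using assms(4) r by auto
  have i: "(Im a + Im b / 2) + (e * Im b / 2) * sqrt 5 = 0 + 0 * sqrt 5"
    using arg_cong[OF assms(3), of Im] by (simp add: field_simps)
  have "e * Im b / 2 = 0"
    by (rule real_rep_unique[OF _ _ _ _ i]) (use ra eR in auto)
  then have 2: "Im b = 0" "Im a = 0" using assms(4) i by auto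
  show ?thesis using 1 2 by (simp add: complex_eq_iff)
qed

lemma GP_zero:
  assumes "GP x x'" shows "x = 0 \<longleftrightarrow> x' = 0"
proof -
  obtain a b where h: "a \<in> GI" "b \<in> GI" "x = a + b * tau" "x' = a + b * taub"
    using assms unfolding GP_def by blast
  have te: "tau = of_real ((1 + 1 * sqrt 5)/2)" unfolding tau_def by simp
  have tbe: "taub = of_real ((1 + (-1) * sqrt 5)/2)" unfolding taub_def tb_def by simp
  show ?thesis
  proof
    assume "x = 0" then have "a + b * tau = 0" using h(3) by simp
    then have "a + b * of_real ((1 + 1 * sqrt 5)/2) = 0" unfolding te .
    then have "a = 0 \<and> b = 0" using GI_lin_zero[OF h(1,2), of 1] by simp
    then show "x' = 0" using h by simp
  next
    assume "x' = 0" then have "a + b * taub = 0" using h(4) by simp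
    then have "a + b * of_real ((1 + (-1) * sqrt 5)/2) = 0" unfolding tbe .
    then have "a = 0 \<and> b = 0" using GI_lin_zero[OF h(1,2), of "-1"] by simp
    then show "x = 0" using h by simp
  qed
qed


lemma cmod_gauss: "cmod (of_int a + of_int b * \<i>) \<le> \<bar>real_of_int a\<bar> + \<bar>real_of_int b\<bar>"
proof -
  have "cmod (of_int a + of_int b * \<i>) \<le> cmod (of_int a) + cmod (of_int b * \<i>)"
    by (rule norm_triangle_ineq)
  also have "... = \<bar>real_of_int a\<bar> + \<bar>real_of_int b\<bar>" by (simp add: norm_mult)
  finally show ?thesis .
qed

lemma Lset_GP:
  assumes "x \<in> Lset N"
  shows "GP x (sigmaE x)" "cmod x \<le> 6 * N" "cmod (sigmaE x) \<le> 4 * N"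
proof -
  obtain a b c d :: int where x: "x = (of_int a + of_int b * \<i>) + (of_int c + of_int d * \<i>) * tau"
    and bd: "\<bar>real_of_int a\<bar> \<le> N" "\<bar>real_of_int b\<bar> \<le> N" "\<bar>real_of_int c\<bar> \<le> N" "\<bar>real_of_int d\<bar> \<le> N"
    using assms unfolding Lset_def by blast
  have s: "sigmaE x = (of_int a + of_int b * \<i>) + (of_int c + of_int d * \<i>) * taub"
    unfolding x by (rule sigma_L)
  show "GP x (sigmaE x)" unfolding GP_def
    apply (rule exI[of _ "of_int a + of_int b * \<i>"], rule exI[of _ "of_int c + of_int d * \<i>"])
    using GI_int[of a b] GI_int[of c d] s x by simp
  have nt: "cmod tau \<le> 2" using t_gt unfolding tau_t by simp
  have ntb: "cmod taub \<le> 1" using tb_bds unfolding taub_def by simp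
  have N0: "0 \<le> N" using bd(1) by linarith
  have g1: "cmod (of_int a + of_int b * \<i>) \<le> 2 * N" using cmod_gauss[of a b] bd(1,2) by linarith
  have g2: "cmod (of_int c + of_int d * \<i>) \<le> 2 * N" using cmod_gauss[of c d] bd(3,4) by linarith
  have "cmod x \<le> cmod (of_int a + of_int b * \<i>) + cmod ((of_int c + of_int d * \<i>) * tau)"
    unfolding x by (rule norm_triangle_ineq)
  also have "... = cmod (of_int a + of_int b * \<i>) + cmod (of_int c + of_int d * \<i>) * cmod tau"
    by (simp only: norm_mult)
  also have "... \<le> 2 * N + (2 * N) * 2"
    using g1 g2 nt N0 by (intro add_mono mult_mono) simp_all
  finally show "cmod x \<le> 6 * N" by simp
  have "cmod (sigmaE x) \<le> cmod (of_int a + of_int b * \<i>) + cmod ((of_int c + of_int d * \<i>) * taub)"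
    unfolding s by (rule norm_triangle_ineq)
  also have "... = cmod (of_int a + of_int b * \<i>) + cmod (of_int c + of_int d * \<i>) * cmod taub"
    by (simp only: norm_mult)
  also have "... \<le> 2 * N + (2 * N) * 1"
    using g1 g2 ntb N0 by (intro add_mono mult_mono) simp_all
  finally show "cmod (sigmaE x) \<le> 4 * N" by simp
qed

lemma det_lower:
  assumes x1: "x1 \<in> Lset N" "x1 \<noteq> 0" and x2: "x2 \<in> Lset N" "x2 \<noteq> 0"
  shows "1 \<le> cmod (detX x1 x2) * (48 * N^2)"
proof -
  define s1 where "s1 = sigmaE x1"
  define s2 where "s2 = sigmaE x2"
  have g1: "GP x1 s1" and g2: "GP x2 s2" using Lset_GP x1 x2 unfolding s1_def s2_def by auto
  define d where "d = x1 * s2 - s1 * (\<i> * x2)"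
  define d' where "d' = s1 * x2 - x1 * (\<i> * s2)"
  have dd: "detX x1 x2 = d" unfolding detX_def d_def s1_def s2_def ..
  have gd: "GP d d'" unfolding d_def d'_def
    by (rule GP_diff[OF GP_mult[OF g1 GP_swap[OF g2]] GP_mult[OF GP_swap[OF g1] GP_i[OF g2]]])
  have "d \<noteq> 0"
  proof
    assume "d = 0"
    then have "d' = 0" using GP_zero[OF gd] by simp
    have e1: "x1 * s2 = s1 * (\<i> * x2)" using \<open>d = 0\<close> unfolding d_def by simp
    have e2: "s1 * x2 = x1 * (\<i> * s2)" using \<open>d' = 0\<close> unfolding d'_def by simp
    have "(x1 * s2) * (s1 * x2) = (s1 * (\<i> * x2)) * (x1 * (\<i> * s2))" using e1 e2 by simp
    also have "... = - ((x1 * s2) * (s1 * x2))" by (simp add: algebra_simps)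
    finally have "x1 * s2 * (s1 * x2) = 0" by auto
    moreover have "s1 \<noteq> 0" using GP_zero[OF g1] x1(2) by simp
    moreover have "s2 \<noteq> 0" using GP_zero[OF g2] x2(2) by simp
    ultimately show False using x1(2) x2(2) by simp
  qed
  then have "d' \<noteq> 0" using GP_zero[OF gd] by simp
  have "1 \<le> cmod (d * d')" using GP_norm[OF gd] \<open>d \<noteq> 0\<close> \<open>d' \<noteq> 0\<close> by (intro GI_norm_ge) auto
  also have "... = cmod d * cmod d'" by (simp add: norm_mult)
  also have "... \<le> cmod d * (48 * N^2)"
  proof (rule mult_left_mono)
    have b1: "cmod x1 \<le> 6 * N" "cmod s1 \<le> 4 * N" using Lset_GP x1 unfolding s1_def by auto
    have b2: "cmod x2 \<le> 6 * N" "cmod s2 \<le> 4 * N" using Lset_GP x2 unfolding s2_def by auto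
    have N0: "0 \<le> N" using b1(1) norm_ge_zero[of x1] by linarith
    have "cmod d' \<le> cmod (s1 * x2) + cmod (x1 * (\<i> * s2))"
      unfolding d'_def by (rule norm_triangle_ineq4)
    also have "... = cmod s1 * cmod x2 + cmod x1 * cmod s2" by (simp add: norm_mult)
    finally have "cmod d' \<le> cmod s1 * cmod x2 + cmod x1 * cmod s2" .
    also have "... \<le> (4 * N) * (6 * N) + (6 * N) * (4 * N)"
      using b1 b2 N0 by (intro add_mono mult_mono) simp_all
    finally show "cmod d' \<le> 48 * N^2" by (simp add: power2_eq_square)
  qed simp
  finally show ?thesis unfolding dd .
qed

definition Dset :: "real \<Rightarrow> real set" where
  "Dset N = {cmod (detX x1 x2) | x1 x2. x1 \<in> Lset N - {0} \<and> x2 \<in> Lset N - {0}}"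

lemma Lset_finite: "finite (Lset N)"
proof -
  define K where "K = {-\<lceil>N\<rceil>..\<lceil>N\<rceil>}"
  define f where "f = (\<lambda>(a,b,c,d). (of_int a + of_int b * \<i>) + (of_int c + of_int d * \<i>) * tau)"
  have "Lset N \<subseteq> f ` (K \<times> K \<times> K \<times> K)"
  proof
    fix x assume "x \<in> Lset N"
    then obtain a b c d :: int where x: "x = (of_int a + of_int b * \<i>) + (of_int c + of_int d * \<i>) * tau"
      and bd: "\<bar>real_of_int a\<bar> \<le> N" "\<bar>real_of_int b\<bar> \<le> N" "\<bar>real_of_int c\<bar> \<le> N" "\<bar>real_of_int d\<bar> \<le> N"
      unfolding Lset_def by blast
    have inK: "z \<in> K" if "\<bar>real_of_int z\<bar> \<le> N" for z
    proof -
      have h: "real_of_int z \<le> N \<and> - real_of_int z \<le> N" using that by (simp add: abs_le_iff)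
      have "z \<le> \<lceil>N\<rceil>" using ceiling_mono[of "real_of_int z" N] h by simp
      moreover have "\<lceil>real_of_int (- z)\<rceil> \<le> \<lceil>N\<rceil>" by (rule ceiling_mono) (use h in simp)
      then have "- z \<le> \<lceil>N\<rceil>" by (simp only: ceiling_of_int)
      ultimately have "z \<le> \<lceil>N\<rceil>" "- \<lceil>N\<rceil> \<le> z" by linarith+
      then show ?thesis unfolding K_def by simp
    qed
    show "x \<in> f ` (K \<times> K \<times> K \<times> K)"
      using inK[OF bd(1)] inK[OF bd(2)] inK[OF bd(3)] inK[OF bd(4)] x unfolding f_def
      by (intro image_eqI[of _ _ "(a,b,c,d)"]) (simp_all add: f_def)
  qed
  moreover have "finite (f ` (K \<times> K \<times> K \<times> K))" unfolding K_def by simp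
  ultimately show ?thesis by (rule finite_subset)
qed

lemma one_Lset: "N \<ge> 1 \<Longrightarrow> 1 \<in> Lset N"
proof -
  assume "N \<ge> 1"
  have "(1::complex) = (of_int 1 + of_int 0 * \<i>) + (of_int 0 + of_int 0 * \<i>) * tau" by simp
  then show ?thesis unfolding Lset_def using \<open>N \<ge> 1\<close>
    by (intro CollectI exI[of _ 1] exI[of _ 0] conjI) auto
qed

lemma Dset_finite: "finite (Dset N)"
proof -
  have "Dset N \<subseteq> (\<lambda>(x1,x2). cmod (detX x1 x2)) ` ((Lset N - {0}) \<times> (Lset N - {0}))"
  proof
    fix y assume "y \<in> Dset N"
    then obtain x1 x2 where "x1 \<in> Lset N - {0}" "x2 \<in> Lset N - {0}" "y = cmod (detX x1 x2)"
      unfolding Dset_def by blast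
    then show "y \<in> (\<lambda>(x1,x2). cmod (detX x1 x2)) ` ((Lset N - {0}) \<times> (Lset N - {0}))"
      by (intro image_eqI[of _ _ "(x1,x2)"]) simp_all
  qed
  moreover have "finite ((\<lambda>(x1,x2). cmod (detX x1 x2)) ` ((Lset N - {0}) \<times> (Lset N - {0})))"
    using Lset_finite by simp
  ultimately show ?thesis by (rule finite_subset)
qed

lemma Dmin_le:
  assumes "x1 \<in> Lset N" "x1 \<noteq> 0" "x2 \<in> Lset N" "x2 \<noteq> 0"
  shows "Dmin N \<le> cmod (detX x1 x2)"
proof -
  have "cmod (detX x1 x2) \<in> Dset N" unfolding Dset_def
    by (rule CollectI, rule exI[of _ x1], rule exI[of _ x2]) (simp add: assms)
  moreover have "Dmin N = Min (Dset N)" unfolding Dmin_def Dset_def ..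
  ultimately show ?thesis using Dset_finite by simp
qed

lemma Dmin_lower:
  assumes "N \<ge> 1" shows "1 \<le> Dmin N * (48 * N^2)"
proof -
  have "cmod (detX 1 1) \<in> Dset N" unfolding Dset_def
    by (rule CollectI, rule exI[of _ 1], rule exI[of _ 1]) (simp add: one_Lset[OF assms])
  then have ne: "Dset N \<noteq> {}" by auto
  have "Dmin N = Min (Dset N)" unfolding Dmin_def Dset_def ..
  then have "Dmin N \<in> Dset N" using Min_in[OF Dset_finite ne] by simp
  then obtain x1 x2 where "x1 \<in> Lset N - {0}" "x2 \<in> Lset N - {0}" "Dmin N = cmod (detX x1 x2)"
    unfolding Dset_def by blast
  then show ?thesis using det_lower[of x1 N x2] by simp
qed


fun padd :: "int list \<Rightarrow> int list \<Rightarrow> int list" where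
  "padd [] ys = ys"
| "padd xs [] = xs"
| "padd (x#xs) (y#ys) = (x+y) # padd xs ys"

fun pmul :: "int list \<Rightarrow> int list \<Rightarrow> int list" where
  "pmul [] ys = []"
| "pmul (x#xs) ys = padd (map (\<lambda>y. x*y) ys) (0 # pmul xs ys)"

fun peval :: "int list \<Rightarrow> 'a::comm_ring_1 \<Rightarrow> 'a" where
  "peval [] z = 0"
| "peval (c#cs) z = of_int c + z * peval cs z"

lemma peval_padd: "peval (padd xs ys) z = peval xs z + peval ys z"
  by (induction xs ys rule: padd.induct) (auto simp: algebra_simps)

lemma peval_map: "peval (map (\<lambda>y. x*y) ys) z = of_int x * peval ys z"
  by (induction ys) (auto simp: algebra_simps)

lemma peval_pmul: "peval (pmul xs ys) z = peval xs z * peval ys z"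
  by (induction xs) (auto simp: peval_padd peval_map algebra_simps)

lemma peval_mono: "peval (replicate k 0 @ [1]) z = z ^ k"
  by (induction k) auto

definition Pl :: "int list" where "Pl = [1, 2, 3, 3, 3, 1, -1, -4, -5, -6, -5, -4, -1, 1, 3, 4, 5, 5, 4, 3, 1, 0, -2, -2, -3, -2, -3, -2, -3, -2, -2, 0, 1, 3, 4, 5, 5, 4, 3, 1, -1, -4, -5, -6, -5, -4, -1, 1, 3, 3, 3, 2, 1]"
definition Ql :: "int list" where "Ql = [1, -1, 0, 1, -1, 2, -1, 0, 1, -1, 3, -2, 1, 1, -1, 3, -2, 2, 0, 0, 3, -3, 3, 0, 0, 3, -3, 3, 0, 0, 3, -3, 3, 0, 0, 2, -2, 3, -1, 1, 1, -2, 3, -1, 1, 0, -1, 2, -1, 1, 0, -1, 1]"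

lemma PQ_list: "pmul [-1,1] (pmul Pl Ql) = -1 # replicate 104 0 @ [1]"
  unfolding Pl_def Ql_def by code_simp

lemma PQ_id: "(z - 1) * peval Pl z * peval Ql z = z ^ 105 - (1::'a::comm_ring_1)"
proof -
  have h: "peval (pmul [-1,1] (pmul Pl Ql)) z = peval (-1 # replicate 104 0 @ [1]) z"
    by (simp only: PQ_list)
  have l: "peval (pmul [-1,1] (pmul Pl Ql)) z = (z - 1) * (peval Pl z * peval Ql z)"
    by (simp only: peval_pmul) (simp add: algebra_simps)
  have r: "peval (-1 # replicate 104 0 @ [1]) z = z^105 - 1"
  proof -
    have e: "z^105 = z * z^104" using power_Suc[of z 104] by simp
    have "peval (-1 # (replicate 104 0 @ [1])) z = -1 + z * peval (replicate 104 0 @ [1]) z" by simp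
    also have "... = z^105 - 1" by (simp only: peval_mono e) simp
    finally show ?thesis by simp
  qed
  have "(z - 1) * (peval Pl z * peval Ql z) = z^105 - 1" using h l r by metis
  then show ?thesis by (simp only: mult.assoc)
qed

lemma peval_bound:
  fixes y :: complex
  shows "cmod (peval cs y) \<le> sum_list (map (\<lambda>c. \<bar>real_of_int c\<bar>) cs) * (max 1 (cmod y)) ^ (length cs - 1)"
proof (induction cs)
  case Nil then show ?case by simp
next
  case (Cons c ds)
  define M where "M = max 1 (cmod y)"
  have M1: "1 \<le> M" and My: "cmod y \<le> M" unfolding M_def by auto
  define S where "S = sum_list (map (\<lambda>c. \<bar>real_of_int c\<bar>) ds)"
  have S0: "0 \<le> S" unfolding S_def by (induction ds) auto
  show ?case
  proof (cases ds)
    case Nil then show ?thesis by simp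
  next
    case (Cons d es)
    then have len: "length (c # ds) - 1 = Suc (length ds - 1)" by simp
    have IH: "cmod (peval ds y) \<le> S * M ^ (length ds - 1)" using Cons.IH unfolding S_def M_def .
    have "cmod (peval (c # ds) y) \<le> \<bar>real_of_int c\<bar> + cmod y * cmod (peval ds y)"
      by (simp add: norm_mult norm_triangle_ineq[THEN order_trans])
    also have "... \<le> \<bar>real_of_int c\<bar> * M ^ (Suc (length ds - 1)) + M * (S * M ^ (length ds - 1))"
    proof (rule add_mono)
      show "\<bar>real_of_int c\<bar> \<le> \<bar>real_of_int c\<bar> * M ^ Suc (length ds - 1)"
      proof -
        have "1 \<le> M ^ Suc (length ds - 1)" using M1 by (rule one_le_power)
        from mult_left_mono[OF this abs_ge_zero[of "real_of_int c"]] show ?thesis by simp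
      qed
      show "cmod y * cmod (peval ds y) \<le> M * (S * M ^ (length ds - 1))"
        using My IH M1 by (intro mult_mono) auto
    qed
    also have "... = (\<bar>real_of_int c\<bar> + S) * M ^ (length (c # ds) - 1)"
      unfolding len by (simp add: algebra_simps)
    finally show ?thesis unfolding S_def M_def by simp
  qed
qed

lemma Pl_facts: "sum_list (map (\<lambda>c. \<bar>real_of_int c\<bar>) Pl) = 151" "length Pl = 53"
  unfolding Pl_def by simp_all
lemma Ql_facts: "sum_list (map (\<lambda>c. \<bar>real_of_int c\<bar>) Ql) = 75" "length Ql = 53"
  unfolding Ql_def by simp_all


definition ZP :: "complex \<Rightarrow> complex \<Rightarrow> bool" where
  "ZP x x' \<longleftrightarrow> (\<exists>a c::int. x = of_int a + of_int c * tau \<and> x' = of_int a + of_int c * taub)"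

lemma ZP_mult: assumes "ZP x x'" "ZP y y'" shows "ZP (x * y) (x' * y')"
proof -
  obtain a c b d :: int where h: "x = of_int a + of_int c * tau" "x' = of_int a + of_int c * taub"
    "y = of_int b + of_int d * tau" "y' = of_int b + of_int d * taub" using assms unfolding ZP_def by blast
  have "x * y = of_int (a*b) + of_int (a*d + c*b) * tau + of_int (c*d) * (tau*tau)"
    unfolding h by (simp add: algebra_simps)
  then have 1: "x * y = of_int (a*b + c*d) + of_int (a*d + c*b + c*d) * tau"
    unfolding tau_sq by (simp add: algebra_simps)
  have "x' * y' = of_int (a*b) + of_int (a*d + c*b) * taub + of_int (c*d) * (taub*taub)"
    unfolding h by (simp add: algebra_simps)
  then have 2: "x' * y' = of_int (a*b + c*d) + of_int (a*d + c*b + c*d) * taub"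
    unfolding taub_sq by (simp add: algebra_simps)
  show ?thesis unfolding ZP_def using 1 2 by blast
qed

lemma ZP_int: "ZP (of_int k) (of_int k)"
  unfolding ZP_def by (rule exI[of _ k], rule exI[of _ 0]) simp

lemma ZP_uminus: assumes "ZP x x'" shows "ZP (- x) (- x')"
proof -
  obtain a c :: int where h: "x = of_int a + of_int c * tau" "x' = of_int a + of_int c * taub"
    using assms unfolding ZP_def by blast
  show ?thesis unfolding ZP_def h by (rule exI[of _ "-a"], rule exI[of _ "-c"]) simp
qed

lemma ZP_add: assumes "ZP x x'" "ZP y y'" shows "ZP (x + y) (x' + y')"
proof -
  obtain a c b d :: int where h: "x = of_int a + of_int c * tau" "x' = of_int a + of_int c * taub"
    "y = of_int b + of_int d * tau" "y' = of_int b + of_int d * taub" using assms unfolding ZP_def by blast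
  show ?thesis unfolding ZP_def h by (rule exI[of _ "a+b"], rule exI[of _ "c+d"]) (simp add: algebra_simps)
qed

lemma ZP_swap: assumes "ZP x x'" shows "ZP x' x"
proof -
  obtain a c :: int where h: "x = of_int a + of_int c * tau" "x' = of_int a + of_int c * taub"
    using assms unfolding ZP_def by blast
  have tb: "taub = 1 - tau" using tau_plus_taub by (simp add: algebra_simps)
  show ?thesis unfolding ZP_def h tb by (rule exI[of _ "a+c"], rule exI[of _ "-c"]) (simp add: algebra_simps)
qed

lemma ZP_tau: "ZP tau taub"
  unfolding ZP_def by (rule exI[of _ 0], rule exI[of _ 1]) simp

lemma ZP_pow: assumes "ZP x x'" shows "ZP (x ^ k) (x' ^ k)"
proof (induction k)
  case 0 show ?case using ZP_int[of 1] by simp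
next
  case (Suc k) show ?case using ZP_mult[OF assms Suc] by simp
qed

lemma ZP_peval: assumes "ZP y y'" shows "ZP (peval cs y) (peval cs y')"
proof (induction cs)
  case Nil show ?case using ZP_int[of 0] by simp
next
  case (Cons c cs) show ?case using ZP_add[OF ZP_int[of c] ZP_mult[OF assms Cons]] by simp
qed

lemma ZP_prod: fixes j :: nat assumes "\<And>i. ZP (f i) (g i)" shows "ZP (\<Prod>i<j. f i) (\<Prod>i<j. g i)"
proof (induction j)
  case 0 show ?case using ZP_int[of 1] by simp
next
  case (Suc j) show ?case using ZP_mult[OF Suc assms] by simp
qed

lemma ZP_coeff:
  assumes "x = of_int a + of_int c * tau" "x' = of_int a + of_int c * taub"
  shows "\<bar>real_of_int a\<bar> \<le> 2 * (cmod x + cmod x')" "\<bar>real_of_int c\<bar> \<le> 2 * (cmod x + cmod x')"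
proof -
  have "x - x' = of_int c * (tau - taub)" unfolding assms by (simp add: algebra_simps)
  also have "tau - taub = of_real (sqrt 5)" unfolding tau_t taub_def using t_minus_tb
    by (metis of_real_diff)
  finally have "cmod (x - x') = \<bar>real_of_int c\<bar> * sqrt 5" by (simp add: norm_mult)
  moreover have "cmod (x - x') \<le> cmod x + cmod x'" by (rule norm_triangle_ineq4)
  moreover have "\<bar>real_of_int c\<bar> * 2 \<le> \<bar>real_of_int c\<bar> * sqrt 5"
    using s5_bounds by (intro mult_left_mono) auto
  ultimately have c2: "\<bar>real_of_int c\<bar> * 2 \<le> cmod x + cmod x'" by linarith
  then show "\<bar>real_of_int c\<bar> \<le> 2 * (cmod x + cmod x')" by simp
  have "of_int a = x - of_int c * tau" unfolding assms by simp
  then have "\<bar>real_of_int a\<bar> = cmod (x - of_int c * tau)" by (metis norm_of_int)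
  also have "... \<le> cmod x + cmod (of_int c * tau)" by (rule norm_triangle_ineq4)
  finally have n1: "\<bar>real_of_int a\<bar> \<le> cmod x + cmod (of_int c * tau)" .
  have "cmod (of_int c * tau) = \<bar>real_of_int c\<bar> * t" unfolding tau_t norm_mult using t_gt by simp
  also have "... \<le> \<bar>real_of_int c\<bar> * 2" using t_gt by (intro mult_left_mono) auto
  finally have "\<bar>real_of_int a\<bar> \<le> cmod x + \<bar>real_of_int c\<bar> * 2" using n1 by linarith
  then show "\<bar>real_of_int a\<bar> \<le> 2 * (cmod x + cmod x')" using c2 norm_ge_zero[of x] norm_ge_zero[of x'] by (smt (verit))
qed

definition Gs :: "nat \<Rightarrow> complex \<Rightarrow> complex" where
  "Gs j y = (\<Prod>i<j. peval Pl (y ^ (105 ^ i)))"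
definition Hs :: "nat \<Rightarrow> complex \<Rightarrow> complex" where
  "Hs j y = (y - 1) * (\<Prod>i<j. peval Ql (y ^ (105 ^ i)))"
definition sj :: "nat \<Rightarrow> nat" where "sj j = (\<Sum>i<j. 105 ^ i)"

lemma GH: "Gs j y * Hs j y = y ^ (105 ^ j) - 1"
proof (induction j)
  case 0 show ?case unfolding Gs_def Hs_def by simp
next
  case (Suc j)
  define z where "z = y ^ (105 ^ j)"
  have g: "Gs (Suc j) y = Gs j y * peval Pl z" unfolding Gs_def z_def by simp
  have h: "Hs (Suc j) y = Hs j y * peval Ql z" unfolding Hs_def z_def by (simp add: algebra_simps)
  have "Gs (Suc j) y * Hs (Suc j) y = (Gs j y * Hs j y) * (peval Pl z * peval Ql z)"
    unfolding g h by (simp add: algebra_simps)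
  also have "... = (z - 1) * peval Pl z * peval Ql z" unfolding Suc z_def by (simp add: algebra_simps)
  also have "... = z ^ 105 - 1" by (rule PQ_id)
  also have "z ^ 105 = y ^ (105 ^ Suc j)" unfolding z_def by (simp add: power_mult[symmetric] mult.commute)
  finally show ?case .
qed


lemma sj_Suc: "sj (Suc j) = sj j + 105 ^ j" unfolding sj_def by simp

lemma sj_id: "104 * sj j + 1 = 105 ^ j"
  by (induction j) (simp_all add: sj_Suc sj_def[of 0])

lemma prod_bound:
  fixes y :: complex
  assumes S: "sum_list (map (\<lambda>c. \<bar>real_of_int c\<bar>) cs) = S" and L: "length cs = 53"
  shows "cmod (\<Prod>i<j. peval cs (y ^ (105 ^ i))) \<le> S ^ j * (max 1 (cmod y)) ^ (52 * sj j)"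
proof (induction j)
  case 0 show ?case by (simp add: sj_def)
next
  case (Suc j)
  define M where "M = max 1 (cmod y)"
  define k where "k = (105::nat) ^ j"
  have M1: "1 \<le> M" and My: "cmod y \<le> M" unfolding M_def by auto
  have S0: "0 \<le> S" unfolding S[symmetric] by (induction cs) auto
  have zk: "max 1 (cmod (y ^ k)) \<le> M ^ k"
  proof -
    have "cmod (y ^ k) \<le> M ^ k" unfolding norm_power by (rule power_mono[OF My]) simp
    moreover have "1 \<le> M ^ k" using M1 by (rule one_le_power)
    ultimately show ?thesis by simp
  qed
  have pb: "cmod (peval cs (y ^ k)) \<le> S * M ^ (52 * k)"
  proof -
    have "cmod (peval cs (y ^ k)) \<le> S * (max 1 (cmod (y ^ k))) ^ 52"
      using peval_bound[of cs "y ^ k"] unfolding S L by simp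
    also have "... \<le> S * (M ^ k) ^ 52"
      using zk S0 by (intro mult_left_mono power_mono) auto
    also have "(M ^ k) ^ 52 = M ^ (52 * k)" by (simp add: power_mult[symmetric] mult.commute)
    finally show ?thesis .
  qed
  have "cmod (\<Prod>i<Suc j. peval cs (y ^ (105 ^ i)))
        = cmod (\<Prod>i<j. peval cs (y ^ (105 ^ i))) * cmod (peval cs (y ^ k))"
    unfolding k_def by (simp add: norm_mult)
  also have "... \<le> (S ^ j * M ^ (52 * sj j)) * (S * M ^ (52 * k))"
    using Suc.IH pb S0 M1 unfolding M_def by (intro mult_mono) auto
  also have "... = S ^ Suc j * M ^ (52 * sj (Suc j))"
    unfolding sj_Suc k_def by (simp add: algebra_simps power_add)
  finally show ?case unfolding M_def .
qed


lemma nu_ZP: "ZP (- tau) (- taub)" by (rule ZP_uminus[OF ZP_tau])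
lemma cmod_tau: "cmod tau = t" unfolding tau_t using t_gt by simp
lemma cmod_taub: "cmod taub = 1 / t" unfolding taub_def using abs_tb by simp
lemma tau_nz: "tau \<noteq> 0" using cmod_tau t_gt by auto
lemma taub_nz: "taub \<noteq> 0" using cmod_taub t_gt by auto

lemma TT: "(tau^2)^u * (taub^2)^u = 1"
proof -
  have "(tau^2)^u * (taub^2)^u = ((tau * taub)^2)^u" by (simp add: power_mult_distrib)
  also have "... = 1" unfolding tau_taub by simp
  finally show ?thesis .
qed

lemma pow_4u1: "(- z) ^ (4 * u + 1) = - z * ((z^2)^u)^2" for z :: complex
proof -
  have "(- z) ^ (4 * u + 1) = (- z) * ((-z)^2)^(2*u)" by (simp add: power_mult[symmetric] mult.commute)
  also have "... = - z * ((z^2)^u)^2" by (simp add: power_mult[symmetric] mult.commute mult.left_commute)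
  finally show ?thesis .
qed

lemma sq_pow: "((- z) ^ u)^2 = (z^2)^u" for z :: complex
  by (simp add: power_mult[symmetric] mult.commute)

lemma det_identity:
  fixes T T' :: complex
  assumes "T * T' = 1"
  shows "(tau * T + T') * (1 - \<i> * taub) - (taub * T' + T) * (\<i> * (1 - \<i> * tau))
         = 2 * T' * (1 - \<i> * taub)"
proof -
  have e: "tau * taub = -1" by (rule tau_taub)
  have i2: "\<i> * \<i> = (-1::complex)" by simp
  show ?thesis using e i2 by algebra
qed


lemma construction:
  fixes j :: nat
  defines "u \<equiv> 26 * sj j"
  shows "\<exists>x1 x2. x1 \<in> Lset (20 * 151^j * t^u) \<and> x1 \<noteq> 0 \<and> x2 \<in> Lset (20 * 151^j * t^u) \<and> x2 \<noteq> 0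
           \<and> cmod (detX x1 x2) \<le> 4 * (1/t)^(2*u)"
proof -
  define Nj where "Nj = 20 * 151^j * t^u"
  have n: "105 ^ j = 4 * u + 1" using sj_id[of j] unfolding u_def by simp
  have ex: "52 * sj j = 2 * u" unfolding u_def by simp
  have t0: "0 < t" "1 \<le> t" using t_gt by auto
  define G where "G = Gs j (- tau)"
  define G' where "G' = Gs j (- taub)"
  define H where "H = Hs j (- tau)"
  define H' where "H' = Hs j (- taub)"
  have zG: "ZP G G'" unfolding G_def G'_def Gs_def
    by (rule ZP_prod, rule ZP_peval, rule ZP_pow, rule nu_ZP)
  have zH: "ZP H H'" unfolding H_def H'_def Hs_def
    by (rule ZP_mult, rule ZP_add[OF nu_ZP ZP_int[of "-1"], simplified],
        rule ZP_prod, rule ZP_peval, rule ZP_pow, rule nu_ZP)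
  have cnu: "cmod (- tau) = t" using cmod_tau by simp
  have cnub: "cmod (- taub) = 1 / t" using cmod_taub by simp
  have mx1: "max 1 (cmod (- tau)) = t" using cnu t0 by simp
  have mx2: "max 1 (cmod (- taub)) = 1" using cnub t0 by simp
  have bG: "cmod G \<le> 151 ^ j * t ^ (2 * u)"
    using prod_bound[OF Pl_facts, where j=j and y="- tau"] unfolding G_def Gs_def mx1 ex .
  have bG': "cmod G' \<le> 151 ^ j"
    using prod_bound[OF Pl_facts, where j=j and y="- taub"] unfolding G'_def Gs_def mx2 by simp
  have bH: "cmod H \<le> (t + 1) * (75 ^ j * t ^ (2 * u))"
  proof -
    have "cmod H = cmod (- tau - 1) * cmod (\<Prod>i<j. peval Ql ((- tau) ^ (105 ^ i)))"
      unfolding H_def Hs_def by (simp add: norm_mult)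
    also have "... \<le> (t + 1) * (75 ^ j * t ^ (2 * u))"
    proof (rule mult_mono)
      show "cmod (- tau - 1) \<le> t + 1" using norm_triangle_ineq4[of "- tau" 1] cnu by simp
      show "cmod (\<Prod>i<j. peval Ql ((- tau) ^ (105 ^ i))) \<le> 75 ^ j * t ^ (2 * u)"
        using prod_bound[OF Ql_facts, where j=j and y="- tau"] unfolding mx1 ex .
    qed (use t0 in auto)
    finally show ?thesis .
  qed
  have bH': "cmod H' \<le> 2 * 75 ^ j"
  proof -
    have "cmod H' = cmod (- taub - 1) * cmod (\<Prod>i<j. peval Ql ((- taub) ^ (105 ^ i)))"
      unfolding H'_def Hs_def by (simp add: norm_mult)
    also have "... \<le> 2 * 75 ^ j"
    proof (rule mult_mono)
      have "cmod (- taub - 1) \<le> 1 / t + 1" using norm_triangle_ineq4[of "- taub" 1] cnub by simp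
      also have "... \<le> 2" using t0 by simp
      finally show "cmod (- taub - 1) \<le> 2" .
      show "cmod (\<Prod>i<j. peval Ql ((- taub) ^ (105 ^ i))) \<le> 75 ^ j"
        using prod_bound[OF Ql_facts, where j=j and y="- taub"] unfolding mx2 by simp
    qed auto
    finally show ?thesis .
  qed
  define x1 where "x1 = G * (- taub) ^ u"
  define x1' where "x1' = G' * (- tau) ^ u"
  define p where "p = - ((- tau) ^ u * H')"
  define p' where "p' = - ((- taub) ^ u * H)"
  have zx1: "ZP x1 x1'" unfolding x1_def x1'_def
    by (rule ZP_mult[OF zG ZP_pow[OF ZP_swap[OF nu_ZP]]])
  have zp: "ZP p p'" unfolding p_def p'_def
    by (rule ZP_uminus[OF ZP_mult[OF ZP_pow[OF nu_ZP] ZP_swap[OF zH]]])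
  have tu: "t ^ (2 * u) * (1 / t) ^ u = t ^ u"
  proof -
    have a: "t ^ (2 * u) = t ^ u * t ^ u" by (simp add: mult_2 power_add)
    have b: "t ^ u * (1 / t) ^ u = 1" using t0 by (simp add: power_mult_distrib[symmetric])
    show ?thesis unfolding a using b by (simp add: mult.assoc)
  qed
  have bx1: "cmod x1 \<le> 151 ^ j * t ^ u"
  proof -
    have "cmod x1 = cmod G * (1 / t) ^ u" unfolding x1_def norm_mult norm_power cnub ..
    also have "... \<le> 151 ^ j * t ^ (2 * u) * (1 / t) ^ u" using bG t0 by (intro mult_right_mono) auto
    finally show ?thesis using tu by (simp add: mult.assoc)
  qed
  have bx1': "cmod x1' \<le> 151 ^ j * t ^ u"
  proof -
    have "cmod x1' = cmod G' * t ^ u" unfolding x1'_def norm_mult norm_power cnu ..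
    also have "... \<le> 151 ^ j * t ^ u" using bG' t0 by (intro mult_right_mono) auto
    finally show ?thesis .
  qed
  have bp: "cmod p \<le> 2 * 75 ^ j * t ^ u"
  proof -
    have "cmod p = t ^ u * cmod H'" unfolding p_def by (simp add: norm_mult norm_power cmod_tau)
    also have "... \<le> t ^ u * (2 * 75 ^ j)" using bH' t0 by (intro mult_left_mono) auto
    finally show ?thesis by (simp add: algebra_simps)
  qed
  have bp': "cmod p' \<le> 3 * 75 ^ j * t ^ u"
  proof -
    have "cmod p' = (1 / t) ^ u * cmod H" unfolding p'_def by (simp add: norm_mult norm_power cmod_taub)
    also have "... \<le> (1 / t) ^ u * ((t + 1) * (75 ^ j * t ^ (2 * u)))" using bH t0 by (intro mult_left_mono) auto
    also have "... = (t + 1) * 75 ^ j * (t ^ (2 * u) * (1 / t) ^ u)" by (simp add: algebra_simps)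
    also have "... = (t + 1) * 75 ^ j * t ^ u" unfolding tu ..
    also have "... \<le> 3 * 75 ^ j * t ^ u" using t_gt by (intro mult_right_mono) auto
    finally show ?thesis .
  qed
  obtain a c :: int where ac: "x1 = of_int a + of_int c * tau" "x1' = of_int a + of_int c * taub"
    using zx1 unfolding ZP_def by blast
  obtain e f :: int where ef: "p = of_int e + of_int f * tau" "p' = of_int e + of_int f * taub"
    using zp unfolding ZP_def by blast
  have K: "(75::real) ^ j \<le> 151 ^ j" by (rule power_mono) auto
  have tu0: "0 \<le> t ^ u" using t0 by simp
  have K2: "75 ^ j * t ^ u \<le> 151 ^ j * t ^ u" using K tu0 by (rule mult_right_mono)
  have B0: "0 \<le> 151 ^ j * t ^ u" using tu0 by simp
  have Nj0: "0 \<le> Nj" unfolding Nj_def using B0 by (simp add: mult.assoc)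
  have NjB: "Nj = 20 * (151 ^ j * t ^ u)" unfolding Nj_def by (simp add: mult.assoc)
  have ca1: "\<bar>real_of_int a\<bar> \<le> Nj" using ZP_coeff(1)[OF ac] bx1 bx1' B0 unfolding NjB by (smt (verit))
  have ca2: "\<bar>real_of_int c\<bar> \<le> Nj" using ZP_coeff(2)[OF ac] bx1 bx1' B0 unfolding NjB by (smt (verit))
  note ca = ca1 ca2
  have bp2: "cmod p \<le> 2 * (75 ^ j * t ^ u)" using bp by (simp add: mult.assoc)
  have bp2': "cmod p' \<le> 3 * (75 ^ j * t ^ u)" using bp' by (simp add: mult.assoc)
  have ce1: "\<bar>real_of_int e\<bar> \<le> 10 * (75 ^ j * t ^ u)" using ZP_coeff(1)[OF ef] bp2 bp2' by (smt (verit))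
  have ce3: "\<bar>real_of_int f\<bar> \<le> 10 * (75 ^ j * t ^ u)" using ZP_coeff(2)[OF ef] bp2 bp2' by (smt (verit))
  have ce2: "\<bar>real_of_int e\<bar> \<le> Nj" "\<bar>real_of_int (- f)\<bar> \<le> Nj" "\<bar>real_of_int f\<bar> \<le> Nj"
      "\<bar>real_of_int (- (e + f))\<bar> \<le> Nj"
    using ce1 ce3 K2 B0 unfolding NjB by auto
  define X1 where "X1 = (of_int a + of_int 0 * \<i>) + (of_int c + of_int 0 * \<i>) * tau"
  define X2 where "X2 = (of_int e + of_int (- f) * \<i>) + (of_int f + of_int (- (e + f)) * \<i>) * tau"
  have X1L: "X1 \<in> Lset Nj" unfolding Lset_def X1_def
    by (rule CollectI, rule exI[of _ a], rule exI[of _ 0], rule exI[of _ c], rule exI[of _ 0])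
       (use ca Nj0 in simp)
  have X2L: "X2 \<in> Lset Nj" unfolding Lset_def X2_def
    by (rule CollectI, rule exI[of _ e], rule exI[of _ "- f"], rule exI[of _ f], rule exI[of _ "- (e + f)"])
       (use ce2 in simp)
  have X1e: "X1 = x1" unfolding X1_def ac by simp
  have sX1: "sigmaE X1 = x1'" unfolding X1_def sigma_L ac by simp
  have i2: "\<i> * \<i> = (-1::complex)" by simp
  have X2e: "X2 = p * (1 - \<i> * tau)"
  proof -
    have "X2 = of_int e - of_int f * \<i> + (of_int f - (of_int e + of_int f) * \<i>) * tau"
      unfolding X2_def by (simp add: algebra_simps)
    also have "... = p * (1 - \<i> * tau)" unfolding ef using tau_sq by algebra
    finally show ?thesis .
  qed
  have sX2: "sigmaE X2 = p' * (1 - \<i> * taub)"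
  proof -
    have "sigmaE X2 = of_int e - of_int f * \<i> + (of_int f - (of_int e + of_int f) * \<i>) * taub"
      unfolding X2_def sigma_L by (simp add: algebra_simps)
    also have "... = p' * (1 - \<i> * taub)" unfolding ef using taub_sq by algebra
    finally show ?thesis .
  qed
  define T where "T = (tau^2)^u"
  define T' where "T' = (taub^2)^u"
  have TT': "T * T' = 1" unfolding T_def T'_def by (rule TT)
  have GHe: "G * H = - tau * T^2 - 1" unfolding G_def H_def GH n pow_4u1 T_def ..
  have GHe': "G' * H' = - taub * T'^2 - 1" unfolding G'_def H'_def GH n pow_4u1 T'_def ..
  have xp1: "x1 * p' = tau * T + T'"
  proof -
    have "x1 * p' = - (G * H) * ((- taub) ^ u)^2" unfolding x1_def p'_def by (simp add: power2_eq_square algebra_simps)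
    also have "... = (tau * T^2 + 1) * T'" unfolding GHe sq_pow T'_def by (simp add: algebra_simps)
    also have "... = tau * T * (T * T') + T'" by (simp add: power2_eq_square algebra_simps)
    finally show ?thesis unfolding TT' by simp
  qed
  have xp2: "x1' * p = taub * T' + T"
  proof -
    have "x1' * p = - (G' * H') * ((- tau) ^ u)^2" unfolding x1'_def p_def by (simp add: power2_eq_square algebra_simps)
    also have "... = (taub * T'^2 + 1) * T" unfolding GHe' sq_pow T_def by (simp add: algebra_simps)
    also have "... = taub * T' * (T * T') + T" by (simp add: power2_eq_square algebra_simps)
    finally show ?thesis unfolding TT' by simp
  qed
  have det: "detX X1 X2 = 2 * T' * (1 - \<i> * taub)"
  proof -
    have "detX X1 X2 = (x1 * p') * (1 - \<i> * taub) - (x1' * p) * (\<i> * (1 - \<i> * tau))"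
      unfolding detX_def sX2 sX1 unfolding X1e X2e by (simp add: ac_simps)
    also have "... = 2 * T' * (1 - \<i> * taub)" unfolding xp1 xp2 by (rule det_identity[OF TT'])
    finally show ?thesis .
  qed
  have cT': "cmod T' = (1 / t) ^ (2 * u)" unfolding T'_def norm_power cmod_taub by (simp add: power_mult)
  have "cmod (detX X1 X2) = 2 * cmod T' * cmod (1 - \<i> * taub)" unfolding det by (simp add: norm_mult)
  also have "... \<le> 2 * cmod T' * 2"
  proof (rule mult_left_mono)
    have "cmod (1 - \<i> * taub) \<le> 1 + cmod (\<i> * taub)" using norm_triangle_ineq4[of 1 "\<i> * taub"] by simp
    also have "... \<le> 2" using cmod_taub t0 by (simp add: norm_mult)
    finally show "cmod (1 - \<i> * taub) \<le> 2" .
  qed simp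
  finally have dB: "cmod (detX X1 X2) \<le> 4 * (1 / t) ^ (2 * u)" unfolding cT' by simp
  have n1: "(- tau) ^ (105 ^ j) - 1 \<noteq> 0"
  proof
    assume "(- tau) ^ (105 ^ j) - 1 = 0"
    then have "cmod ((- tau) ^ (105 ^ j)) = 1" by simp
    moreover have "cmod ((- tau) ^ (105 ^ j)) = t ^ (105 ^ j)" by (simp add: norm_power cmod_tau)
    moreover have "t ^ (105 ^ j) > 1" using t_gt by (intro one_less_power) auto
    ultimately show False by simp
  qed
  have n2: "(- taub) ^ (105 ^ j) - 1 \<noteq> 0"
  proof
    assume "(- taub) ^ (105 ^ j) - 1 = 0"
    then have "cmod ((- taub) ^ (105 ^ j)) = 1" by simp
    moreover have "cmod ((- taub) ^ (105 ^ j)) = (1 / t) ^ (105 ^ j)" by (simp add: norm_power cmod_taub)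
    moreover have "(1 / t) ^ (105 ^ j) < 1" using t_gt by (subst power_less_one_iff) auto
    ultimately show False by simp
  qed
  have "G \<noteq> 0" using n1 GH[of j "- tau"] unfolding G_def by auto
  then have X1nz: "X1 \<noteq> 0" unfolding X1e x1_def using taub_nz by simp
  have "H' \<noteq> 0" using n2 GH[of j "- taub"] unfolding H'_def by auto
  then have "p \<noteq> 0" unfolding p_def using tau_nz by simp
  moreover have "1 - \<i> * tau \<noteq> 0"
  proof
    assume "1 - \<i> * tau = 0"
    then have "Re (1 - \<i> * tau) = 0" by simp
    then show False unfolding tau_t by simp
  qed
  ultimately have X2nz: "X2 \<noteq> 0" unfolding X2e by simp
  show ?thesis using X1L X2L X1nz X2nz dB unfolding Nj_def by blast
qed


lemma pow105: "2 * j + 1 \<le> (105::nat) ^ j"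
  by (induction j) auto

lemma sj_sq: "j * j \<le> sj j"
proof (induction j)
  case 0 show ?case by (simp add: sj_def)
next
  case (Suc j)
  have "Suc j * Suc j = j * j + (2 * j + 1)" by simp
  also have "... \<le> sj j + 105 ^ j" using Suc pow105[of j] by linarith
  finally show ?case unfolding sj_Suc .
qed

lemma upper_bound:
  assumes N: "N \<ge> 2"
  shows "- ln (Dmin N) / ln N \<le> 2 + ln 48 / ln N"
proof -
  have lN: "ln N > 0" using N by simp
  have D: "1 \<le> Dmin N * (48 * N^2)" using Dmin_lower N by simp
  have Dp: "Dmin N > 0" using D N by (smt (verit) mult_nonpos_nonneg zero_le_power2)
  have "1 / (48 * N^2) \<le> Dmin N" using D N by (simp add: field_simps)
  then have "ln (1 / (48 * N^2)) \<le> ln (Dmin N)" using N Dp by (subst ln_le_cancel_iff) auto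
  moreover have "ln (1 / (48 * N^2)) = - (ln 48 + 2 * ln N)"
    using N by (simp add: ln_div ln_mult ln_realpow)
  ultimately have "- ln (Dmin N) \<le> ln 48 + 2 * ln N" by simp
  then have "- ln (Dmin N) / ln N \<le> (ln 48 + 2 * ln N) / ln N" using lN by (intro divide_right_mono) auto
  also have "... = 2 + ln 48 / ln N" using lN by (simp add: field_simps)
  finally show ?thesis .
qed

lemma eventually_upper:
  assumes r: "r > 2"
  shows "eventually (\<lambda>N. - ln (Dmin N) / ln N < r) at_top"
proof -
  define X where "X = max 2 (exp (ln 48 / (r - 2)) + 1)"
  have "- ln (Dmin N) / ln N < r" if "N \<ge> X" for N
  proof -
    have N2: "N \<ge> 2" using that unfolding X_def by simp
    have "N > exp (ln 48 / (r - 2))" using that unfolding X_def by simp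
    then have "ln N > ln 48 / (r - 2)" using N2 by (metis exp_gt_zero less_trans ln_exp ln_less_cancel_iff)
    then have "ln 48 / ln N < r - 2" using r N2
      by (smt (verit) divide_less_eq ln_gt_zero mult.commute pos_divide_less_eq)
    then show ?thesis using upper_bound[OF N2] by linarith
  qed
  then show ?thesis unfolding eventually_at_top_linorder by blast
qed


lemma exists_lower:
  assumes r: "0 \<le> r" "r < 2"
  shows "\<exists>N \<ge> X. r < - ln (Dmin N) / ln N"
proof -
  define L where "L = ln t"
  have L0: "L > 0" unfolding L_def using t_gt by simp
  define \<delta> where "\<delta> = 2 - r"
  have d0: "\<delta> > 0" unfolding \<delta>_def using r by simp
  define A where "A = ln 4 + 2 * ln (20::real)"
  define B where "B = 2 * ln (151::real)"
  have l4: "ln (4::real) > 0" and l20: "ln (20::real) > 0" by simp_all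
  have A0: "A > 0" unfolding A_def using l4 l20 by linarith
  have B0: "B > 0" unfolding B_def by simp
  define j where "j = nat \<lceil>max X ((A + B) / (26 * \<delta> * L))\<rceil> + 1"
  have j1: "real j \<ge> 1" unfolding j_def by simp
  have jX: "real j > X" unfolding j_def by linarith
  have jAB: "real j > (A + B) / (26 * \<delta> * L)" unfolding j_def by linarith
  define u where "u = 26 * sj j"
  have uj: "real u \<ge> 26 * (real j * real j)"
  proof -
    have "26 * (j * j) \<le> u" unfolding u_def using sj_sq[of j] by simp
    then show ?thesis by (metis of_nat_le_iff of_nat_mult of_nat_numeral)
  qed
  define N where "N = 20 * 151 ^ j * t ^ u"
  obtain x1 x2 where xx: "x1 \<in> Lset N" "x1 \<noteq> 0" "x2 \<in> Lset N" "x2 \<noteq> 0"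
      "cmod (detX x1 x2) \<le> 4 * (1/t)^(2*u)"
    using construction[of j] unfolding N_def u_def by blast
  have tu1: "t ^ u \<ge> 1" using t_gt by (intro one_le_power) auto
  have p151: "(151::real) ^ j \<ge> real j"
  proof -
    have "j < 2 ^ j" by (rule less_exp)
    then have "real j \<le> 2 ^ j" by (metis less_imp_le of_nat_le_iff of_nat_numeral of_nat_power)
    also have "(2::real) ^ j \<le> 151 ^ j" by (rule power_mono) auto
    finally show ?thesis .
  qed
  have N_ge: "N \<ge> 20 * 151 ^ j" unfolding N_def using tu1 by (simp add: mult_le_cancel_left1)
  have NX: "N \<ge> X" using N_ge p151 jX by linarith
  have N1: "N \<ge> 1" using N_ge p151 j1 by linarith
  have Dle: "Dmin N \<le> 4 * (1/t)^(2*u)" using Dmin_le[OF xx(1-4)] xx(5) by linarith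
  have D: "1 \<le> Dmin N * (48 * N^2)" using Dmin_lower N1 by simp
  have Dp: "Dmin N > 0" using D N1 by (smt (verit) mult_nonpos_nonneg zero_le_power2)
  have lnN: "ln N = ln 20 + real j * ln 151 + real u * L"
    unfolding N_def L_def using t_gt by (simp add: ln_mult ln_realpow)
  have lnN0: "ln N > 0"
  proof -
    have "ln 20 > (0::real)" by simp
    moreover have "real j * ln 151 \<ge> 0" by simp
    moreover have "real u * L \<ge> 0" using L0 by simp
    ultimately show ?thesis unfolding lnN by linarith
  qed
  have lnD: "- ln (Dmin N) \<ge> 2 * real u * L - ln 4"
  proof -
    have "ln (Dmin N) \<le> ln (4 * (1/t)^(2*u))" using Dle Dp t_gt by (subst ln_le_cancel_iff) auto
    also have "ln (4 * (1/t)^(2*u)) = ln 4 - 2 * real u * L"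
      unfolding L_def using t_gt by (simp add: ln_mult ln_realpow ln_div)
    finally show ?thesis by simp
  qed
  define P where "P = real u * L"
  define Q where "Q = real j * ln (151::real)"
  define R where "R = r * P"
  have key: "r * ln N < 2 * P - ln 4"
  proof -
    have e1: "r * ln N \<le> r * ln 20 + 2 * Q + R"
    proof -
      have "r * Q \<le> 2 * Q" using r unfolding Q_def by (intro mult_right_mono) auto
      moreover have "r * ln N = r * ln 20 + r * Q + R" unfolding lnN R_def P_def Q_def by (simp add: algebra_simps)
      ultimately show ?thesis by linarith
    qed
    have e2: "r * ln 20 \<le> 2 * ln (20::real)" using r by (intro mult_right_mono) auto
    have e3: "(A + B) * real j < 26 * \<delta> * L * (real j * real j)"
    proof -
      have pos: "26 * \<delta> * L > 0" using d0 L0 by simp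
      have "(A + B) < 26 * \<delta> * L * real j" using jAB pos by (simp add: field_simps)
      then have "(A + B) * real j < (26 * \<delta> * L * real j) * real j" using j1 by (intro mult_strict_right_mono) auto
      then show ?thesis by (simp add: algebra_simps)
    qed
    have e4: "A + B * real j \<le> (A + B) * real j" using j1 A0 by (simp add: algebra_simps)
    have e5: "26 * \<delta> * L * (real j * real j) \<le> \<delta> * L * real u"
    proof -
      have "\<delta> * L * (26 * (real j * real j)) \<le> \<delta> * L * real u" using uj d0 L0 by (intro mult_left_mono) auto
      then show ?thesis by (simp add: algebra_simps)
    qed
    have e6: "\<delta> * L * real u = 2 * P - R" unfolding \<delta>_def P_def R_def by (simp add: algebra_simps)
    have e7: "B * real j = 2 * Q" unfolding B_def Q_def by simp
    have e8: "A = ln 4 + 2 * ln 20" unfolding A_def ..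
    show ?thesis using e1 e2 e3 e4 e5 e6 e7 e8 by linarith
  qed
  have lnD': "- ln (Dmin N) \<ge> 2 * P - ln 4" using lnD unfolding P_def by (simp add: algebra_simps)
  have "r < (2 * P - ln 4) / ln N" using key lnN0 by (simp add: field_simps)
  also have "... \<le> - ln (Dmin N) / ln N" using lnD' lnN0 by (intro divide_right_mono) auto
  finally show ?thesis using NX by blast
qed


theorem corollary3p3:
  shows "Limsup at_top (\<lambda>N::real. ereal (- ln (Dmin N) / ln N)) = 2"
proof (rule antisym)
  show "Limsup at_top (\<lambda>N::real. ereal (- ln (Dmin N) / ln N)) \<le> 2"
    unfolding Limsup_le_iff
  proof (intro allI impI)
    fix y :: ereal assume y: "y > 2"
    show "\<forall>\<^sub>F x in at_top. y > ereal (- ln (Dmin x) / ln x)"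
    proof (cases y)
      case (real r)
      then have "r > 2" using y by simp
      then show ?thesis using eventually_upper[of r] unfolding real
        by (auto elim: eventually_mono)
    next
      case PInf then show ?thesis by simp
    next
      case MInf then show ?thesis using y by simp
    qed
  qed
next
  show "2 \<le> Limsup at_top (\<lambda>N::real. ereal (- ln (Dmin N) / ln N))"
    unfolding Limsup_def
  proof (rule INF_greatest)
    fix P :: "real \<Rightarrow> bool" assume "P \<in> {P. eventually P at_top}"
    then have "eventually P at_top" by simp
    then obtain X :: real where X0: "\<forall>N\<ge>X. P N" by (auto simp: eventually_at_top_linorder)
    then have X: "\<And>N. N \<ge> X \<Longrightarrow> P N" by blast
    show "2 \<le> Sup ((\<lambda>N. ereal (- ln (Dmin N) / ln N)) ` Collect P)"
    proof (rule dense_le)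
      fix y :: ereal assume y: "y < 2"
      define r where "r = (if y = -\<infinity> then 0 else max 0 (real_of_ereal y))"
      have r0: "0 \<le> r" "r < 2" unfolding r_def using y
        by (cases y; simp)+
      have yr: "y \<le> ereal r" unfolding r_def using y by (cases y) auto
      obtain N where N: "N \<ge> X" "r < - ln (Dmin N) / ln N" using exists_lower[OF r0] by blast
      have "y \<le> ereal (- ln (Dmin N) / ln N)" using yr N(2) by (simp add: order_trans)
      also have "... \<le> Sup ((\<lambda>N. ereal (- ln (Dmin N) / ln N)) ` Collect P)"
        using X[OF N(1)] by (intro Sup_upper) auto
      finally show "y \<le> Sup ((\<lambda>N. ereal (- ln (Dmin N) / ln N)) ` Collect P)" .
    qed
  qed
qed


end
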